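(* Let $\alpha,\beta,\lambda$ be constants with $\beta\ge 3+2\alpha$ and $0<\lambda<\alpha$. Let $U=[0,1]^2$, $S\subset U$ finite with $(0,0)\in S$, and let $t_i$ be a tile of the tiling of $U$ induced by $S$ (as in the context) that is a $\beta$-tile. Then $$\mathrm{area}(t_i)\le \frac{\beta}{2\lambda e^{\beta-3-2\alpha}}\bigl(\mathrm{area}(A_i)+\mathrm{area}(B_i)\bigr).$$
   Context: Tiling: fix a total order of $S$ in which $p$ precedes $q$ whenever $x(p)+y(p)>x(q)+y(q)$ (ties broken arbitrarily but consistently). Process the points in this order; from the current point cast a ray vertically upward and a ray horizontally rightward, each stopping when it hits the boundary of $U$ or a ray cast from a previously processed point. This partitions $U$ into tiles $t_1,\dots,t_n$, one per point $p_i\in S$: $t_i$ is a simple rectilinear polygon with lower-left corner $p_i$, whose bottom edge $a_i$ and left edge $b_i$ lie on the two rays cast from $p_i$, and whose remaining boundary is a staircase from the top end of $b_i$ to the right end of $a_i$. A concave corner of $t_i$ is a vertex with interior angle $270^\circ$. $t_i$ is a $\beta$-tile if every axis-parallel rectangle contained in $t_i$ has area less than $\frac1\beta\mathrm{area}(t_i)$. The right tip of $t_i$ is the smallest-area region among those of the form "all points of $t_i$ to the right of a vertical line through a concave corner of $t_i$" that have area at least $\frac{\alpha}{\beta}\mathrm{area}(t_i)$; the upper tip is defined analogously with horizontal lines through concave corners and points above them. The main body $t_i'$ consists of the points of $t_i$ not in either tip; $a_i'$ and $b_i'$ are its bottom and left edges (segments of $a_i$, $b_i$ starting at $p_i$),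 and $|\cdot|$ denotes length. $A_i$ is the parallelogram with vertices $p_i$, $p_i+(|a_i'|,0)$, $p_i+((1+\lambda)|a_i'|,-\lambda|a_i'|)$, $p_i+(\lambda|a_i'|,-\lambda|a_i'|)$ (base $a_i'$, height $\lambda|a_i'|$, lying below $a_i'$, other sides of slope $-1$). $B_i$ is the parallelogram with vertices $p_i$, $p_i+(0,|b_i'|)$, $p_i+(-\lambda|b_i'|,(1+\lambda)|b_i'|)$, $p_i+(-\lambda|b_i'|,\lambda|b_i'|)$. *)

theory Defs
  imports "HOL-Analysis.Analysis"
begin

type_synonym pt = "real \<times> real"

definition unit_square :: "pt set" where
  "unit_square = {z. 0 \<le> fst z \<and> fst z \<le> 1 \<and> 0 \<le> snd z \<and> snd z \<le> 1}"

definition dominates :: "pt \<Rightarrow> pt \<Rightarrow> bool" where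
  "dominates p z \<longleftrightarrow> fst p \<le> fst z \<and> snd p \<le> snd z"

definition processing_order :: "pt set \<Rightarrow> pt list \<Rightarrow> bool" where
  "processing_order S ps \<longleftrightarrow> distinct ps \<and> set ps = S \<and>
     sorted_wrt (\<lambda>p q. fst q + snd q \<le> fst p + snd p) ps"

(* The tile of the i-th processed point: the closed region cut out by the ray construction.
   A point z of U lies in the tile of the first-processed point of S that lies weakly
   lower-left of z. *)
definition tile :: "pt list \<Rightarrow> nat \<Rightarrow> pt set" where
  "tile ps i = closure {z \<in> unit_square. dominates (ps ! i) z \<and>
                         (\<forall>j<i. \<not> dominates (ps ! j) z)}"

definition area :: "pt set \<Rightarrow> real" where
  "area X = measure lebesgue X"

definition beta_tile :: "real \<Rightarrow> pt set \<Rightarrow> bool" where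
  "beta_tile \<beta> t \<longleftrightarrow>
     (\<forall>a b c d. a \<le> b \<and> c \<le> d \<and> {a..b} \<times> {c..d} \<subseteq> t \<longrightarrow>
        (b - a) * (d - c) < area t / \<beta>)"

(* c is a vertex of the polygon t with interior angle 270 degrees: near c, the interior of t
   is a disc minus one closed quadrant with apex c *)
definition concave_corner :: "pt set \<Rightarrow> pt \<Rightarrow> bool" where
  "concave_corner t c \<longleftrightarrow>
     (\<exists>\<epsilon>>0. \<exists>sx sy. sx \<in> {-1, 1::real} \<and> sy \<in> {-1, 1::real} \<and>
        ball c \<epsilon> \<inter> interior t =
        ball c \<epsilon> - {z. 0 \<le> sx * (fst z - fst c) \<and> 0 \<le> sy * (snd z - snd c)})"

definition right_part :: "pt set \<Rightarrow> pt \<Rightarrow> pt set" where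
  "right_part t c = {z \<in> t. fst c < fst z}"

definition upper_part :: "pt set \<Rightarrow> pt \<Rightarrow> pt set" where
  "upper_part t c = {z \<in> t. snd c < snd z}"

definition right_tip :: "real \<Rightarrow> real \<Rightarrow> pt set \<Rightarrow> pt set \<Rightarrow> bool" where
  "right_tip \<alpha> \<beta> t T \<longleftrightarrow>
     (\<exists>c. concave_corner t c \<and> T = right_part t c \<and> \<alpha> / \<beta> * area t \<le> area T \<and>
        (\<forall>c'. concave_corner t c' \<and> \<alpha> / \<beta> * area t \<le> area (right_part t c') \<longrightarrow>
              area T \<le> area (right_part t c')))"

definition upper_tip :: "real \<Rightarrow> real \<Rightarrow> pt set \<Rightarrow> pt set \<Rightarrow> bool" where
  "upper_tip \<alpha> \<beta> t T \<longleftrightarrow>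
     (\<exists>c. concave_corner t c \<and> T = upper_part t c \<and> \<alpha> / \<beta> * area t \<le> area T \<and>
        (\<forall>c'. concave_corner t c' \<and> \<alpha> / \<beta> * area t \<le> area (upper_part t c') \<longrightarrow>
              area T \<le> area (upper_part t c')))"

(* lengths of the bottom edge a' and left edge b' of a main body M with lower-left corner p *)
definition bottom_len :: "pt \<Rightarrow> pt set \<Rightarrow> real" where
  "bottom_len p M = measure lebesgue {x. (x, snd p) \<in> M}"

definition left_len :: "pt \<Rightarrow> pt set \<Rightarrow> real" where
  "left_len p M = measure lebesgue {y. (fst p, y) \<in> M}"

definition par_A :: "real \<Rightarrow> pt \<Rightarrow> real \<Rightarrow> pt set" where
  "par_A lam p a = convex hull {p, (fst p + a, snd p),
      (fst p + (1 + lam) * a, snd p - lam * a), (fst p + lam * a, snd p - lam * a)}"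

definition par_B :: "real \<Rightarrow> pt \<Rightarrow> real \<Rightarrow> pt set" where
  "par_B lam p b = convex hull {p, (fst p, snd p + b),
      (fst p - lam * b, snd p + (1 + lam) * b), (fst p - lam * b, snd p + lam * b)}"

end

theory Submission
  imports Defs
begin

definition Dset :: "pt \<Rightarrow> pt set \<Rightarrow> pt set" where
  "Dset p Q = {z \<in> unit_square. dominates p z \<and> (\<forall>q\<in>Q. \<not> dominates q z)}"

definition Tset :: "pt \<Rightarrow> pt set \<Rightarrow> pt set" where
  "Tset p Q = closure (Dset p Q)"

lemma closed_unit_square: "closed unit_square"
proof -
  have "unit_square = {z. 0 \<le> fst z} \<inter> {z. fst z \<le> 1} \<inter> {z. 0 \<le> snd z} \<inter> {z. snd z \<le> (1::real)}"
    by (auto simp: unit_square_def)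
  show ?thesis unfolding \<open>unit_square = _\<close>
    by (intro closed_Int closed_Collect_le continuous_intros)
qed

lemma box_Pair_eq2: "box (a,c) (b,d) = {a<..<(b::real)} \<times> {c<..<(d::real)}"
  by (auto simp: box_def Basis_prod_def Basis_real_def)

lemma bounded_unit_square: "bounded unit_square"
proof -
  have "unit_square \<subseteq> cbox (0,0) (1,1)"
    by (auto simp: unit_square_def cbox_Pair_eq)
  then show ?thesis using bounded_cbox bounded_subset by blast
qed

lemma closed_T: "closed (Tset p Q)"
  by (simp add: Tset_def)

lemma T_sub:
  assumes "z \<in> Tset p Q"
  shows "z \<in> unit_square \<and> fst p \<le> fst z \<and> snd p \<le> snd z"
proof -
  let ?C = "unit_square \<inter> {z. fst p \<le> fst z} \<inter> {z. snd p \<le> snd z}"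
  have "closed ?C"
    by (intro closed_Int closed_unit_square closed_Collect_le continuous_on_fst continuous_on_snd continuous_on_const continuous_on_id)
  moreover have "Dset p Q \<subseteq> ?C" by (auto simp: Dset_def dominates_def)
  ultimately have "Tset p Q \<subseteq> ?C" unfolding Tset_def by (rule closure_minimal[rotated])
  then show ?thesis using assms by auto
qed

lemma compact_T: "compact (Tset p Q)"
proof -
  have "Tset p Q \<subseteq> unit_square" using T_sub by blast
  then show ?thesis using bounded_unit_square bounded_subset closed_T compact_eq_bounded_closed by blast
qed

lemma T_down:
  assumes "z \<in> Tset p Q" "p \<in> unit_square"
    and "fst p \<le> fst w" "snd p \<le> snd w" "fst w \<le> fst z" "snd w \<le> snd z"
  shows "w \<in> Tset p Q"
proof -
  define \<phi> where "\<phi> = (\<lambda>z::pt. (min (fst w) (fst z), min (snd w) (snd z)))"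
  have cont: "continuous_on UNIV \<phi>" unfolding \<phi>_def
    by (intro continuous_intros)
  have "\<phi> ` Dset p Q \<subseteq> Dset p Q"
  proof
    fix u assume "u \<in> \<phi> ` Dset p Q"
    then obtain v where v: "v \<in> Dset p Q" "u = \<phi> v" by auto
    show "u \<in> Dset p Q" using v assms(2-4)
      by (auto simp: Dset_def \<phi>_def dominates_def unit_square_def)
  qed
  then have "\<phi> ` closure (Dset p Q) \<subseteq> closure (Dset p Q)"
    by (meson cont closed_closure closure_subset continuous_on_subset image_closure_subset order_trans subset_UNIV)
  moreover have "\<phi> z = w" using assms(5,6) by (auto simp: \<phi>_def min_def prod_eq_iff)
  ultimately show ?thesis using assms(1) unfolding Tset_def by blast
qed

lemma T_noq:
  assumes "z \<in> Tset p Q" "q \<in> Q"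
  shows "\<not> (fst q < fst z \<and> snd q < snd z)"
proof -
  let ?O = "{z. fst q < fst z} \<inter> {z. snd q < snd z}"
  have "open ?O"
    by (intro open_Int open_Collect_less continuous_on_fst continuous_on_snd continuous_on_const continuous_on_id)
  moreover have "?O \<inter> Dset p Q = {}" using assms(2) by (auto simp: Dset_def dominates_def)
  ultimately have "?O \<inter> Tset p Q = {}" unfolding Tset_def using open_Int_closure_eq_empty by blast
  then show ?thesis using assms(1) by auto
qed

lemma rect_sub:
  assumes "p \<in> unit_square" "a < b" "c < d" "fst p \<le> a" "snd p \<le> c" "b \<le> 1" "d \<le> 1"
    and "\<forall>q\<in>Q. b \<le> fst q \<or> d \<le> snd q"
  shows "cbox (a,c) (b,d) \<subseteq> Tset p Q"
proof -
  have "box (a,c) (b,d) \<subseteq> Dset p Q"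
    using assms by (fastforce simp: box_Pair_eq2 Dset_def dominates_def unit_square_def)
  then have "closure (box (a,c) (b,d)) \<subseteq> Tset p Q"
    unfolding Tset_def by (rule closure_mono)
  moreover have "box (a,c) (b,d) \<noteq> {}" using assms by (simp add: box_Pair_eq2)
  ultimately show ?thesis by simp
qed

lemma meas_cbox: "measure lebesgue (cbox (a,c) (b,d)) = (if a \<le> b \<and> c \<le> d then (b-a)*(d-c) else 0)"
  by (simp add: content_Pair)

lemma rect_meas:
  assumes "p \<in> unit_square" "fst p \<le> a" "snd p \<le> c" "b \<le> 1" "d \<le> 1"
    and "\<forall>q\<in>Q. b \<le> fst q \<or> d \<le> snd q"
    and bt: "beta_tile \<beta> (Tset p Q)" and pos: "0 < area (Tset p Q) / \<beta>"
  shows "measure lebesgue (cbox (a,c) (b,d)) < area (Tset p Q) / \<beta>"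
proof (cases "a < b \<and> c < d")
  case True
  then have "cbox (a,c) (b,d) \<subseteq> Tset p Q" using rect_sub assms by blast
  then have "{a..b} \<times> {c..d} \<subseteq> Tset p Q" by (simp add: cbox_Pair_eq)
  then have "(b - a) * (d - c) < area (Tset p Q) / \<beta>" using bt True unfolding beta_tile_def by auto
  then show ?thesis using True by (simp add: meas_cbox)
next
  case False
  then have "measure lebesgue (cbox (a,c) (b,d)) = 0"
    by (auto simp: meas_cbox mult_le_0_iff)
  then show ?thesis using pos by simp
qed


lemma dist_shift: "dist ((x::real) + u, (y::real) + v) (x, y) \<le> \<bar>u\<bar> + \<bar>v\<bar>"
  by (smt (verit) diff_Pair dist_norm norm_Pair_le real_norm_def)

lemma dist_shift': "dist (fst c + u, snd c + v) c \<le> \<bar>u\<bar> + \<bar>v\<bar>"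
  using dist_shift[of "fst c" u "snd c" v] by simp

lemma concave_in:
  assumes "concave_corner t c" "closed t"
  shows "c \<in> t"
proof -
  obtain \<epsilon> sx sy where e: "\<epsilon> > 0" "sx \<in> {-1, 1::real}" "sy \<in> {-1, 1::real}"
    and eq: "ball c \<epsilon> \<inter> interior t =
        ball c \<epsilon> - {z. 0 \<le> sx * (fst z - fst c) \<and> 0 \<le> sy * (snd z - snd c)}"
    using assms(1) unfolding concave_corner_def by blast
  have "c \<in> closure t"
  proof (rule iffD2[OF closure_approachable], intro allI impI)
    fix e :: real assume "e > 0"
    define d where "d = min e \<epsilon> / 3"
    have d: "d > 0" "d < e" "d < \<epsilon>" using \<open>e > 0\<close> e(1) by (auto simp: d_def)
    define y where "y = (fst c + (- sx * d), snd c + (- sy * d))"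
    have "dist y c \<le> \<bar>- sx * d\<bar> + \<bar>- sy * d\<bar>" unfolding y_def by (rule dist_shift')
    also have "\<dots> = 2 * d" using e(2,3) d by auto
    finally have dy: "dist y c \<le> 2 * d" .
    have "y \<in> ball c \<epsilon>" using dy d by (simp add: dist_commute d_def)
    moreover have "\<not> (0 \<le> sx * (fst y - fst c))" using e(2) d by (auto simp: y_def)
    ultimately have "y \<in> interior t" using eq by blast
    then have "y \<in> t" using interior_subset by blast
    moreover have "dist y c < e" using dy d unfolding d_def by linarith
    ultimately show "\<exists>y\<in>t. dist y c < e" by blast
  qed
  then show ?thesis using assms(2) by simp
qed

lemma concave_Q:
  assumes "finite Q" "q \<in> Q" "p \<in> unit_square"
    and "fst p < fst q" "fst q < 1" "snd p < snd q" "snd q < 1"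
    and nd: "\<forall>q'\<in>Q. dominates q' q \<longrightarrow> q' = q"
  shows "concave_corner (Tset p Q) q"
proof -
  let ?B = "{z::pt. fst p < fst z} \<inter> {z. fst z < 1} \<inter> {z. snd p < snd z} \<inter> {z. snd z < 1}"
  let ?V = "?B \<inter> (\<Inter>q'\<in>Q-{q}. ({z. fst z < fst q'} \<union> {z. snd z < snd q'}))"
  have oB: "open ?B" by (intro open_Int open_Collect_less continuous_intros)
  have oU: "\<And>q'::pt. open ({z::pt. fst z < fst q'} \<union> {z. snd z < snd q'})"
    by (intro open_Un open_Collect_less continuous_intros)
  have "open ?V"
    using assms(1) oB oU by (intro open_Int[OF oB] open_INT) auto
  moreover have "q \<in> ?V" using assms nd by (auto simp: dominates_def)
  ultimately obtain \<epsilon> where e: "\<epsilon> > 0" "ball q \<epsilon> \<subseteq> ?V" using open_contains_ball by blast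
  let ?C = "{z. 0 \<le> 1 * (fst z - fst q) \<and> 0 \<le> 1 * (snd z - snd q)}"
  have "ball q \<epsilon> \<inter> interior (Tset p Q) = ball q \<epsilon> - ?C"
  proof
    show "ball q \<epsilon> \<inter> interior (Tset p Q) \<subseteq> ball q \<epsilon> - ?C"
    proof
      fix z assume z: "z \<in> ball q \<epsilon> \<inter> interior (Tset p Q)"
      show "z \<in> ball q \<epsilon> - ?C"
      proof (rule ccontr)
        assume "z \<notin> ball q \<epsilon> - ?C"
        then have zq: "fst q \<le> fst z" "snd q \<le> snd z" using z by auto
        obtain e' where e': "e' > 0" "ball z e' \<subseteq> Tset p Q"
          using z open_contains_ball[of "interior (Tset p Q)"] interior_subset by blast
        define w where "w = (fst z + e'/3, snd z + e'/3)"
        have "dist w z \<le> \<bar>e'/3\<bar> + \<bar>e'/3\<bar>" unfolding w_def by (rule dist_shift')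
        then have "w \<in> ball z e'" using e' by (simp add: dist_commute)
        then have "w \<in> Tset p Q" using e' by blast
        moreover have "fst q < fst w \<and> snd q < snd w" using zq e' by (auto simp: w_def)
        ultimately show False using T_noq assms(2) by blast
      qed
    qed
  next
    show "ball q \<epsilon> - ?C \<subseteq> ball q \<epsilon> \<inter> interior (Tset p Q)"
    proof
      fix z assume z: "z \<in> ball q \<epsilon> - ?C"
      let ?W = "?V - {z. fst q \<le> fst z \<and> snd q \<le> snd z}"
      have cC: "closed {z::pt. fst q \<le> fst z \<and> snd q \<le> snd z}"
        by (simp add: closed_Collect_conj closed_Collect_le continuous_on_fst continuous_on_snd continuous_on_const continuous_on_id)
      have oW: "open ?W" using \<open>open ?V\<close> cC by (rule open_Diff)
      have "?W \<subseteq> Dset p Q"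
      proof
        fix u assume u: "u \<in> ?W"
        have "u \<in> unit_square" using u assms(3) by (auto simp: unit_square_def)
        moreover have "dominates p u" using u by (auto simp: dominates_def)
        moreover have "\<forall>q'\<in>Q. \<not> dominates q' u"
        proof
          fix q' assume "q' \<in> Q"
          show "\<not> dominates q' u"
          proof (cases "q' = q")
            case True then show ?thesis using u by (auto simp: dominates_def)
          next
            case False
            then have "q' \<in> Q - {q}" using \<open>q' \<in> Q\<close> by blast
            moreover have "u \<in> (\<Inter>q'\<in>Q-{q}. ({z. fst z < fst q'} \<union> {z. snd z < snd q'}))"
              using u by (simp only: Diff_iff Int_iff)
            ultimately have "fst u < fst q' \<or> snd u < snd q'" by auto
            then show ?thesis by (auto simp: dominates_def)
          qed
        qed
        ultimately show "u \<in> Dset p Q" by (simp add: Dset_def)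
      qed
      then have "?W \<subseteq> Tset p Q" unfolding Tset_def using closure_subset by blast
      then have "?W \<subseteq> interior (Tset p Q)" using oW interior_maximal by blast
      moreover have "z \<in> ?W" using z e(2) by auto
      ultimately show "z \<in> ball q \<epsilon> \<inter> interior (Tset p Q)" using z by blast
    qed
  qed
  then have "\<epsilon> > 0 \<and> (1::real) \<in> {-1, 1} \<and> (1::real) \<in> {-1, 1} \<and> ball q \<epsilon> \<inter> interior (Tset p Q) = ball q \<epsilon> - ?C"
    using e(1) by simp
  then show ?thesis unfolding concave_corner_def by blast
qed


lemma meas_box: "measure lebesgue (box (a,c) (b,d)) = (if a \<le> b \<and> c \<le> d then (b-a)*(d-c) else 0)"
proof -
  have "measure lborel (box (a,c) (b,d)) = measure lborel (cbox (a,c) (b,d))"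
    by (simp only: measure_lborel_box_eq measure_lborel_cbox_eq)
  then show ?thesis using meas_cbox[of a c b d] by simp
qed

lemma lmeas_T: "Tset p Q \<in> lmeasurable"
  using compact_T lmeasurable_compact by blast

lemma closed_lebesgue: "closed (S::pt set) \<Longrightarrow> S \<in> sets lebesgue"
  by fastforce

lemma lmeas_rp: "right_part (Tset p Q) c \<in> lmeasurable"
proof -
  have "right_part (Tset p Q) c = Tset p Q - {z. fst z \<le> fst c}"
    by (auto simp: right_part_def)
  moreover have "closed {z::pt. fst z \<le> fst c}"
    by (intro closed_Collect_le continuous_intros)
  ultimately show ?thesis using lmeas_T fmeasurable_Diff closed_lebesgue by metis
qed

lemma lmeas_up: "upper_part (Tset p Q) c \<in> lmeasurable"
proof -
  have "upper_part (Tset p Q) c = Tset p Q - {z. snd z \<le> snd c}"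
    by (auto simp: upper_part_def)
  moreover have "closed {z::pt. snd z \<le> snd c}"
    by (intro closed_Collect_le continuous_intros)
  ultimately show ?thesis using lmeas_T fmeasurable_Diff closed_lebesgue by metis
qed

lemma right_tip_bound:
  assumes finQ: "finite Q" and QU: "Q \<subseteq> unit_square" and pU: "p \<in> unit_square"
    and bt: "beta_tile \<beta> (Tset p Q)" and Rpos: "0 < area (Tset p Q) / \<beta>"
    and apos: "0 < \<alpha>" and tip: "right_tip \<alpha> \<beta> (Tset p Q) TR"
  shows "area TR < (\<alpha> + 1) * (area (Tset p Q) / \<beta>)"
proof -
  define T where "T = Tset p Q"
  define R where "R = area T / \<beta>"
  have Rpos': "R > 0" using Rpos by (simp add: R_def T_def)
  have aR: "\<alpha> / \<beta> * area T = \<alpha> * R" by (simp add: R_def)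
  obtain c where cc: "concave_corner T c" and TRc: "TR = right_part T c"
    and lb: "\<alpha> * R \<le> area TR"
    and minim: "\<And>c'. concave_corner T c' \<Longrightarrow> \<alpha> * R \<le> area (right_part T c') \<Longrightarrow> area TR \<le> area (right_part T c')"
    using tip unfolding right_tip_def aR T_def[symmetric] by blast
  define x0 where "x0 = fst c"
  have "c \<in> T" using concave_in[OF cc] closed_T by (simp add: T_def)
  then have px0: "fst p \<le> x0" using T_sub by (simp add: x0_def T_def)
  define Q0 where "Q0 = {q\<in>Q. fst q \<le> x0}"
  define m0 where "m0 = Min (insert 1 (snd ` Q0))"
  have finQ0: "finite (insert 1 (snd ` Q0))" using finQ by (simp add: Q0_def)
  have m0le1: "m0 \<le> 1" unfolding m0_def using finQ0 by simp
  have m0le: "\<And>q. q \<in> Q \<Longrightarrow> fst q \<le> x0 \<Longrightarrow> m0 \<le> snd q"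
    unfolding m0_def using finQ0 by (auto simp: Q0_def)
  have rpT: "\<And>c'. right_part T c' \<subseteq> T" by (auto simp: right_part_def)
  have lmT: "T \<in> lmeasurable" by (simp add: T_def lmeas_T)
  have lmrp: "\<And>c'. right_part T c' \<in> lmeasurable" by (simp add: T_def lmeas_rp)
  have facti: "snd z \<le> m0 \<and> snd p \<le> snd z \<and> x0 < fst z \<and> fst z \<le> 1" if "z \<in> TR" for z
  proof -
    have z: "z \<in> T" "x0 < fst z" using that by (auto simp: TRc right_part_def x0_def)
    have "\<forall>y \<in> insert 1 (snd ` Q0). snd z \<le> y"
    proof
      fix y assume "y \<in> insert 1 (snd ` Q0)"
      then show "snd z \<le> y"
      proof
        assume "y = 1" then show ?thesis using z T_sub by (auto simp: T_def unit_square_def)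
      next
        assume "y \<in> snd ` Q0"
        then obtain q where q: "q \<in> Q" "fst q \<le> x0" "y = snd q" by (auto simp: Q0_def)
        then show "snd z \<le> y" using T_noq[of z p Q q] z by (auto simp: T_def)
      qed
    qed
    then have "snd z \<le> m0" unfolding m0_def using finQ0 by simp
    then show ?thesis using z T_sub[of z p Q] by (auto simp: T_def unit_square_def)
  qed
  define J where "J = {q\<in>Q. x0 < fst q \<and> snd q < m0}"
  have finJ: "finite J" using finQ by (simp add: J_def)
  show ?thesis unfolding T_def[symmetric] R_def[symmetric]
  proof (rule ccontr)
    assume "\<not> area TR < (\<alpha> + 1) * R"
    then have big: "(\<alpha> + 1) * R \<le> area TR" by simp
    have aRpos: "0 < \<alpha> * R" using apos Rpos' by simp
    have distr: "(\<alpha> + 1) * R = \<alpha> * R + R" by (simp add: algebra_simps)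
    show False
    proof (cases "J = {}")
      case True
      have cond: "\<forall>q\<in>Q. 1 \<le> fst q \<or> m0 \<le> snd q"
      proof
        fix q assume q: "q \<in> Q"
        show "1 \<le> fst q \<or> m0 \<le> snd q"
        proof (cases "fst q \<le> x0")
          case True then show ?thesis using m0le q by blast
        next
          case False then have "q \<notin> J" using \<open>J = {}\<close> by blast
          then show ?thesis using q False by (auto simp: J_def)
        qed
      qed
      have "measure lebesgue (cbox (x0, snd p) (1, m0)) < R"
        using rect_meas[OF pU px0 _ _ m0le1 cond bt Rpos] by (simp add: R_def T_def)
      moreover have "TR \<subseteq> cbox (x0, snd p) (1, m0)"
        using facti by (auto simp: cbox_Pair_eq less_imp_le)
      then have "area TR \<le> measure lebesgue (cbox (x0, snd p) (1, m0))"
        unfolding area_def using lmrp TRc by (intro measure_mono_fmeasurable) auto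
      ultimately show False using big aRpos distr by linarith
    next
      case False
      define x1 where "x1 = Min (fst ` J)"
      have x1J: "x1 \<in> fst ` J" unfolding x1_def using False finJ by simp
      have x1le: "\<And>q. q \<in> J \<Longrightarrow> x1 \<le> fst q" unfolding x1_def using finJ by simp
      define J1 where "J1 = {q\<in>J. fst q = x1}"
      have finJ1: "finite J1" "J1 \<noteq> {}" using finJ x1J by (auto simp: J1_def)
      define y1 where "y1 = Min (snd ` J1)"
      have y1J: "y1 \<in> snd ` J1" unfolding y1_def using finJ1 by simp
      have y1le: "\<And>q. q \<in> J1 \<Longrightarrow> y1 \<le> snd q" unfolding y1_def using finJ1 by simp
      define q1 where "q1 = (x1, y1)"
      have q1J: "q1 \<in> J" using y1J by (auto simp: J1_def q1_def)
      then have q1Q: "q1 \<in> Q" and x0x1: "x0 < x1" and y1m0: "y1 < m0"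
        by (auto simp: J_def q1_def)
      have x1le1: "x1 \<le> 1" using q1Q QU by (auto simp: unit_square_def q1_def)
      have cond: "\<forall>q\<in>Q. x1 \<le> fst q \<or> m0 \<le> snd q"
      proof
        fix q assume q: "q \<in> Q"
        show "x1 \<le> fst q \<or> m0 \<le> snd q"
        proof (cases "fst q \<le> x0")
          case True then show ?thesis using m0le q by blast
        next
          case False
          show ?thesis
          proof (cases "snd q < m0")
            case True then have "q \<in> J" using q False by (auto simp: J_def)
            then show ?thesis using x1le by blast
          qed simp
        qed
      qed
      have R1: "measure lebesgue (cbox (x0, snd p) (x1, m0)) < R"
        using rect_meas[OF pU px0 _ x1le1 m0le1 cond bt Rpos] by (simp add: R_def T_def)
      define rq where "rq = right_part T q1"
      have sub: "TR \<subseteq> cbox (x0, snd p) (x1, m0) \<union> rq"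
      proof
        fix z assume z: "z \<in> TR"
        show "z \<in> cbox (x0, snd p) (x1, m0) \<union> rq"
        proof (cases "fst z \<le> x1")
          case True then show ?thesis using facti[OF z] by (auto simp: cbox_Pair_eq mem_Times_iff less_imp_le)
        next
          case False then show ?thesis using z by (auto simp: rq_def TRc right_part_def q1_def)
        qed
      qed
      have "area TR \<le> measure lebesgue (cbox (x0, snd p) (x1, m0) \<union> rq)"
        unfolding area_def using lmrp[of c] lmrp[of q1] TRc sub rq_def
        by (intro measure_mono_fmeasurable fmeasurable.Un lmeasurable_cbox) auto
      also have "\<dots> \<le> measure lebesgue (cbox (x0, snd p) (x1, m0)) + area rq"
        unfolding area_def using lmrp rq_def by (intro measure_Un_le) auto
      finally have rqbig: "\<alpha> * R < area rq" using R1 big distr by linarith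
      have rqsub: "rq \<subseteq> cbox (x1, snd p) (1, y1)"
      proof
        fix z assume z: "z \<in> rq"
        then have zT: "z \<in> T" and zx: "x1 < fst z" by (auto simp: rq_def right_part_def q1_def)
        have "snd z \<le> y1" using T_noq[of z p Q q1] zT zx q1Q by (auto simp: T_def q1_def)
        then show "z \<in> cbox (x1, snd p) (1, y1)" using zT zx T_sub[of z p Q]
          by (auto simp: cbox_Pair_eq mem_Times_iff T_def unit_square_def less_imp_le)
      qed
      have "area rq \<le> measure lebesgue (cbox (x1, snd p) (1, y1))"
        unfolding area_def using lmrp rq_def rqsub by (intro measure_mono_fmeasurable) auto
      moreover have "0 < area rq" using rqbig aRpos by linarith
      ultimately have "0 < measure lebesgue (cbox (x1, snd p) (1, y1))" by linarith
      then have x1lt1: "x1 < 1" and py1: "snd p < y1"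
        by (auto simp: meas_cbox zero_less_mult_iff split: if_splits)
      have nd: "\<forall>q'\<in>Q. dominates q' q1 \<longrightarrow> q' = q1"
      proof (intro ballI impI)
        fix q' assume q': "q' \<in> Q" "dominates q' q1"
        then have q'1: "fst q' \<le> x1" "snd q' \<le> y1" by (auto simp: dominates_def q1_def)
        have "\<not> fst q' \<le> x0" using m0le[OF q'(1)] q'1 y1m0 by linarith
        then have "q' \<in> J" using q'(1) q'1 y1m0 by (auto simp: J_def)
        then have "fst q' = x1" using x1le[of q'] q'1 by linarith
        then have "q' \<in> J1" using \<open>q' \<in> J\<close> by (simp add: J1_def)
        then have "snd q' = y1" using y1le[of q'] q'1 by linarith
        then show "q' = q1" using \<open>fst q' = x1\<close> by (simp add: q1_def prod_eq_iff)
      qed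
      have ccq1: "concave_corner T q1"
        unfolding T_def using concave_Q[OF finQ q1Q pU] px0 x0x1 x1lt1 py1 y1m0 m0le1 nd
        by (simp add: q1_def)
      have "area TR \<le> area rq" using minim[OF ccq1] rqbig by (simp add: rq_def)
      moreover have "area rq + (x1 - x0) * (m0 - snd p) \<le> area TR"
      proof -
        let ?B = "box (x0, snd p) (x1, m0)"
        have "cbox (x0, snd p) (x1, m0) \<subseteq> T"
          unfolding T_def using rect_sub[OF pU x0x1 _ px0 _ x1le1 m0le1 cond] py1 y1m0 by simp
        then have BT: "?B \<subseteq> T" using box_subset_cbox by blast
        have "?B \<union> rq \<subseteq> TR"
          using BT x0x1 by (auto simp: box_Pair_eq2 TRc right_part_def x0_def rq_def q1_def)
        have "measure lebesgue (?B \<union> rq) = measure lebesgue ?B + area rq"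
        proof -
          have Bm: "?B \<in> lmeasurable" by simp
          have rqm: "rq \<in> lmeasurable" using lmrp rq_def by simp
          have disj: "?B \<inter> rq = {}" by (auto simp: box_Pair_eq2 rq_def right_part_def q1_def)
          show ?thesis unfolding area_def
            using measure_Union[of lebesgue ?B rq] Bm rqm disj by (auto simp: fmeasurable_def)
        qed
        moreover have "measure lebesgue (?B \<union> rq) \<le> area TR"
        proof -
          have Bm: "?B \<in> sets lebesgue" by (intro fmeasurableD) simp
          have rqm: "rq \<in> sets lebesgue" using lmrp[of q1] rq_def by (intro fmeasurableD) simp
          show ?thesis unfolding area_def using lmrp[of c] TRc \<open>?B \<union> rq \<subseteq> TR\<close> Bm rqm
            by (intro measure_mono_fmeasurable sets.Un) auto
        qed
        moreover have "measure lebesgue ?B = (x1 - x0) * (m0 - snd p)"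
          using x0x1 py1 y1m0 by (simp add: meas_box)
        ultimately show ?thesis by linarith
      qed
      moreover have "0 < (x1 - x0) * (m0 - snd p)" using x0x1 py1 y1m0 by simp
      ultimately show False by linarith
    qed
  qed
qed


lemma rect_sub_sw:
  assumes "p \<in> unit_square" "c < d" "a < b" "snd p \<le> c" "fst p \<le> a" "d \<le> 1" "b \<le> 1"
    and "\<forall>q\<in>Q. d \<le> snd q \<or> b \<le> fst q"
  shows "cbox (a,c) (b,d) \<subseteq> Tset p Q"
  using rect_sub[of p a b c d Q] assms by blast

lemma rect_meas_sw:
  assumes "p \<in> unit_square" "snd p \<le> c" "fst p \<le> a" "d \<le> 1" "b \<le> 1"
    and "\<forall>q\<in>Q. d \<le> snd q \<or> b \<le> fst q"
    and bt: "beta_tile \<beta> (Tset p Q)" and pos: "0 < area (Tset p Q) / \<beta>"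
  shows "measure lebesgue (cbox (a,c) (b,d)) < area (Tset p Q) / \<beta>"
  using rect_meas[of p a c b d Q \<beta>] assms by blast

lemma upper_tip_bound:
  assumes finQ: "finite Q" and QU: "Q \<subseteq> unit_square" and pU: "p \<in> unit_square"
    and bt: "beta_tile \<beta> (Tset p Q)" and Rpos: "0 < area (Tset p Q) / \<beta>"
    and apos: "0 < \<alpha>" and tip: "upper_tip \<alpha> \<beta> (Tset p Q) TR"
  shows "area TR < (\<alpha> + 1) * (area (Tset p Q) / \<beta>)"
proof -
  define T where "T = Tset p Q"
  define R where "R = area T / \<beta>"
  have Rpos': "R > 0" using Rpos by (simp add: R_def T_def)
  have aR: "\<alpha> / \<beta> * area T = \<alpha> * R" by (simp add: R_def)
  obtain c where cc: "concave_corner T c" and TRc: "TR = upper_part T c"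
    and lb: "\<alpha> * R \<le> area TR"
    and minim: "\<And>c'. concave_corner T c' \<Longrightarrow> \<alpha> * R \<le> area (upper_part T c') \<Longrightarrow> area TR \<le> area (upper_part T c')"
    using tip unfolding upper_tip_def aR T_def[symmetric] by blast
  define x0 where "x0 = snd c"
  have "c \<in> T" using concave_in[OF cc] closed_T by (simp add: T_def)
  then have px0: "snd p \<le> x0" using T_sub by (simp add: x0_def T_def)
  define Q0 where "Q0 = {q\<in>Q. snd q \<le> x0}"
  define m0 where "m0 = Min (insert 1 (fst ` Q0))"
  have finQ0: "finite (insert 1 (fst ` Q0))" using finQ by (simp add: Q0_def)
  have m0le1: "m0 \<le> 1" unfolding m0_def using finQ0 by simp
  have m0le: "\<And>q. q \<in> Q \<Longrightarrow> snd q \<le> x0 \<Longrightarrow> m0 \<le> fst q"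
    unfolding m0_def using finQ0 by (auto simp: Q0_def)
  have rpT: "\<And>c'. upper_part T c' \<subseteq> T" by (auto simp: upper_part_def)
  have lmT: "T \<in> lmeasurable" by (simp add: T_def lmeas_T)
  have lmrp: "\<And>c'. upper_part T c' \<in> lmeasurable" by (simp add: T_def lmeas_up)
  have facti: "fst z \<le> m0 \<and> fst p \<le> fst z \<and> x0 < snd z \<and> snd z \<le> 1" if "z \<in> TR" for z
  proof -
    have z: "z \<in> T" "x0 < snd z" using that by (auto simp: TRc upper_part_def x0_def)
    have "\<forall>y \<in> insert 1 (fst ` Q0). fst z \<le> y"
    proof
      fix y assume "y \<in> insert 1 (fst ` Q0)"
      then show "fst z \<le> y"
      proof
        assume "y = 1" then show ?thesis using z T_sub by (auto simp: T_def unit_square_def)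
      next
        assume "y \<in> fst ` Q0"
        then obtain q where q: "q \<in> Q" "snd q \<le> x0" "y = fst q" by (auto simp: Q0_def)
        then show "fst z \<le> y" using T_noq[of z p Q q] z by (auto simp: T_def)
      qed
    qed
    then have "fst z \<le> m0" unfolding m0_def using finQ0 by simp
    then show ?thesis using z T_sub[of z p Q] by (auto simp: T_def unit_square_def)
  qed
  define J where "J = {q\<in>Q. x0 < snd q \<and> fst q < m0}"
  have finJ: "finite J" using finQ by (simp add: J_def)
  show ?thesis unfolding T_def[symmetric] R_def[symmetric]
  proof (rule ccontr)
    assume "\<not> area TR < (\<alpha> + 1) * R"
    then have big: "(\<alpha> + 1) * R \<le> area TR" by simp
    have aRpos: "0 < \<alpha> * R" using apos Rpos' by simp
    have distr: "(\<alpha> + 1) * R = \<alpha> * R + R" by (simp add: algebra_simps)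
    show False
    proof (cases "J = {}")
      case True
      have cond: "\<forall>q\<in>Q. 1 \<le> snd q \<or> m0 \<le> fst q"
      proof
        fix q assume q: "q \<in> Q"
        show "1 \<le> snd q \<or> m0 \<le> fst q"
        proof (cases "snd q \<le> x0")
          case True then show ?thesis using m0le q by blast
        next
          case False then have "q \<notin> J" using \<open>J = {}\<close> by blast
          then show ?thesis using q False by (auto simp: J_def)
        qed
      qed
      have "measure lebesgue (cbox (fst p, x0) (m0, 1)) < R"
        using rect_meas_sw[OF pU px0 _ _ m0le1 cond bt Rpos] by (simp add: R_def T_def)
      moreover have "TR \<subseteq> cbox (fst p, x0) (m0, 1)"
        using facti by (auto simp: cbox_Pair_eq less_imp_le)
      then have "area TR \<le> measure lebesgue (cbox (fst p, x0) (m0, 1))"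
        unfolding area_def using lmrp TRc by (intro measure_mono_fmeasurable) auto
      ultimately show False using big aRpos distr by linarith
    next
      case False
      define x1 where "x1 = Min (snd ` J)"
      have x1J: "x1 \<in> snd ` J" unfolding x1_def using False finJ by simp
      have x1le: "\<And>q. q \<in> J \<Longrightarrow> x1 \<le> snd q" unfolding x1_def using finJ by simp
      define J1 where "J1 = {q\<in>J. snd q = x1}"
      have finJ1: "finite J1" "J1 \<noteq> {}" using finJ x1J by (auto simp: J1_def)
      define y1 where "y1 = Min (fst ` J1)"
      have y1J: "y1 \<in> fst ` J1" unfolding y1_def using finJ1 by simp
      have y1le: "\<And>q. q \<in> J1 \<Longrightarrow> y1 \<le> fst q" unfolding y1_def using finJ1 by simp
      define q1 where "q1 = (y1, x1)"
      have q1J: "q1 \<in> J" using y1J by (auto simp: J1_def q1_def)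
      then have q1Q: "q1 \<in> Q" and x0x1: "x0 < x1" and y1m0: "y1 < m0"
        by (auto simp: J_def q1_def)
      have x1le1: "x1 \<le> 1" using q1Q QU by (auto simp: unit_square_def q1_def)
      have cond: "\<forall>q\<in>Q. x1 \<le> snd q \<or> m0 \<le> fst q"
      proof
        fix q assume q: "q \<in> Q"
        show "x1 \<le> snd q \<or> m0 \<le> fst q"
        proof (cases "snd q \<le> x0")
          case True then show ?thesis using m0le q by blast
        next
          case False
          show ?thesis
          proof (cases "fst q < m0")
            case True then have "q \<in> J" using q False by (auto simp: J_def)
            then show ?thesis using x1le by blast
          qed simp
        qed
      qed
      have R1: "measure lebesgue (cbox (fst p, x0) (m0, x1)) < R"
        using rect_meas_sw[OF pU px0 _ x1le1 m0le1 cond bt Rpos] by (simp add: R_def T_def)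
      define rq where "rq = upper_part T q1"
      have sub: "TR \<subseteq> cbox (fst p, x0) (m0, x1) \<union> rq"
      proof
        fix z assume z: "z \<in> TR"
        show "z \<in> cbox (fst p, x0) (m0, x1) \<union> rq"
        proof (cases "snd z \<le> x1")
          case True then show ?thesis using facti[OF z] by (auto simp: cbox_Pair_eq mem_Times_iff less_imp_le)
        next
          case False then show ?thesis using z by (auto simp: rq_def TRc upper_part_def q1_def)
        qed
      qed
      have "area TR \<le> measure lebesgue (cbox (fst p, x0) (m0, x1) \<union> rq)"
        unfolding area_def using lmrp[of c] lmrp[of q1] TRc sub rq_def
        by (intro measure_mono_fmeasurable fmeasurable.Un lmeasurable_cbox) auto
      also have "\<dots> \<le> measure lebesgue (cbox (fst p, x0) (m0, x1)) + area rq"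
        unfolding area_def using lmrp rq_def by (intro measure_Un_le) auto
      finally have rqbig: "\<alpha> * R < area rq" using R1 big distr by linarith
      have rqsub: "rq \<subseteq> cbox (fst p, x1) (y1, 1)"
      proof
        fix z assume z: "z \<in> rq"
        then have zT: "z \<in> T" and zx: "x1 < snd z" by (auto simp: rq_def upper_part_def q1_def)
        have "fst z \<le> y1" using T_noq[of z p Q q1] zT zx q1Q by (auto simp: T_def q1_def)
        then show "z \<in> cbox (fst p, x1) (y1, 1)" using zT zx T_sub[of z p Q]
          by (auto simp: cbox_Pair_eq mem_Times_iff T_def unit_square_def less_imp_le)
      qed
      have "area rq \<le> measure lebesgue (cbox (fst p, x1) (y1, 1))"
        unfolding area_def using lmrp rq_def rqsub by (intro measure_mono_fmeasurable) auto
      moreover have "0 < area rq" using rqbig aRpos by linarith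
      ultimately have "0 < measure lebesgue (cbox (fst p, x1) (y1, 1))" by linarith
      then have x1lt1: "x1 < 1" and py1: "fst p < y1"
        by (auto simp: meas_cbox zero_less_mult_iff split: if_splits)
      have nd: "\<forall>q'\<in>Q. dominates q' q1 \<longrightarrow> q' = q1"
      proof (intro ballI impI)
        fix q' assume q': "q' \<in> Q" "dominates q' q1"
        then have q'1: "snd q' \<le> x1" "fst q' \<le> y1" by (auto simp: dominates_def q1_def)
        have "\<not> snd q' \<le> x0" using m0le[OF q'(1)] q'1 y1m0 by linarith
        then have "q' \<in> J" using q'(1) q'1 y1m0 by (auto simp: J_def)
        then have "snd q' = x1" using x1le[of q'] q'1 by linarith
        then have "q' \<in> J1" using \<open>q' \<in> J\<close> by (simp add: J1_def)
        then have "fst q' = y1" using y1le[of q'] q'1 by linarith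
        then show "q' = q1" using \<open>snd q' = x1\<close> by (simp add: q1_def prod_eq_iff)
      qed
      have ccq1: "concave_corner T q1"
        unfolding T_def using concave_Q[OF finQ q1Q pU] px0 x0x1 x1lt1 py1 y1m0 m0le1 nd
        by (simp add: q1_def)
      have "area TR \<le> area rq" using minim[OF ccq1] rqbig by (simp add: rq_def)
      moreover have "area rq + (x1 - x0) * (m0 - fst p) \<le> area TR"
      proof -
        let ?B = "box (fst p, x0) (m0, x1)"
        have "cbox (fst p, x0) (m0, x1) \<subseteq> T"
          unfolding T_def using rect_sub_sw[OF pU x0x1 _ px0 _ x1le1 m0le1 cond] py1 y1m0 by simp
        then have BT: "?B \<subseteq> T" using box_subset_cbox by blast
        have "?B \<union> rq \<subseteq> TR"
          using BT x0x1 by (auto simp: box_Pair_eq2 TRc upper_part_def x0_def rq_def q1_def)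
        have "measure lebesgue (?B \<union> rq) = measure lebesgue ?B + area rq"
        proof -
          have Bm: "?B \<in> lmeasurable" by simp
          have rqm: "rq \<in> lmeasurable" using lmrp rq_def by simp
          have disj: "?B \<inter> rq = {}" by (auto simp: box_Pair_eq2 rq_def upper_part_def q1_def)
          show ?thesis unfolding area_def
            using measure_Union[of lebesgue ?B rq] Bm rqm disj by (auto simp: fmeasurable_def)
        qed
        moreover have "measure lebesgue (?B \<union> rq) \<le> area TR"
        proof -
          have Bm: "?B \<in> sets lebesgue" by (intro fmeasurableD) simp
          have rqm: "rq \<in> sets lebesgue" using lmrp[of q1] rq_def by (intro fmeasurableD) simp
          show ?thesis unfolding area_def using lmrp[of c] TRc \<open>?B \<union> rq \<subseteq> TR\<close> Bm rqm
            by (intro measure_mono_fmeasurable sets.Un) auto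
        qed
        moreover have "measure lebesgue ?B = (x1 - x0) * (m0 - fst p)"
          using x0x1 py1 y1m0 by (simp add: meas_box)
        ultimately show ?thesis by linarith
      qed
      moreover have "0 < (x1 - x0) * (m0 - fst p)" using x0x1 py1 y1m0 by simp
      ultimately show False by linarith
    qed
  qed
qed

lemma emeasure_lborel_pair_slices:
  assumes "(H::(real*real) set) \<in> sets borel"
  shows "emeasure lborel H = (\<integral>\<^sup>+x. emeasure lborel (Pair x -` H) \<partial>lborel)"
proof -
  have "emeasure lborel H = emeasure (lborel \<Otimes>\<^sub>M lborel) H" by (simp add: lborel_prod)
  also have "\<dots> = (\<integral>\<^sup>+x. emeasure lborel (Pair x -` H) \<partial>lborel)"
    using assms by (intro lborel.emeasure_pair_measure_alt) (simp only: lborel_prod sets_lborel)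
  finally show ?thesis .
qed

lemma emeasure_lborel_pair_slices2:
  assumes "(H::(real*real) set) \<in> sets borel"
  shows "emeasure lborel H = (\<integral>\<^sup>+y. emeasure lborel ((\<lambda>x. (x, y)) -` H) \<partial>lborel)"
proof -
  have "emeasure lborel H = emeasure (lborel \<Otimes>\<^sub>M lborel) H" by (simp add: lborel_prod)
  also have "\<dots> = (\<integral>\<^sup>+y. emeasure lborel ((\<lambda>x. (x, y)) -` H) \<partial>lborel)"
    using assms by (intro lborel_pair.emeasure_pair_measure_alt2) (simp only: lborel_prod sets_lborel)
  finally show ?thesis .
qed

lemma ln_integral:
  fixes c d x0 R :: real
  assumes "0 < c - x0" "c \<le> d" "R > 0"
  shows "((\<lambda>x. R / (x - x0)) has_integral (R * ln (d - x0) - R * ln (c - x0))) {c..d}"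
proof -
  have "((\<lambda>x. R / (x - x0)) has_integral ((\<lambda>x. R * ln (x - x0)) d - (\<lambda>x. R * ln (x - x0)) c)) {c..d}"
  proof (rule fundamental_theorem_of_calculus[where f="\<lambda>x. R * ln (x - x0)", OF assms(2)])
    fix x assume "x \<in> {c..d}"
    then have "x - x0 > 0" using assms by auto
    then have "((\<lambda>x. R * ln (x - x0)) has_real_derivative R / (x - x0)) (at x within {c..d})"
      by (auto intro!: derivative_eq_intros simp: field_simps)
    then show "((\<lambda>x. R * ln (x - x0)) has_vector_derivative R / (x - x0)) (at x within {c..d})"
      by (simp add: has_real_derivative_iff_has_vector_derivative)
  qed
  then show ?thesis by simp
qed

lemma hyper_bound:
  fixes p :: "real \<times> real" and a b R :: real
  assumes R: "R > 0" and a: "a \<ge> 0" and b: "b \<ge> 0" and ab: "R < a * b"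
  shows "measure lebesgue {z. fst p \<le> fst z \<and> fst z \<le> fst p + a \<and> snd p \<le> snd z \<and> snd z \<le> snd p + b \<and>
           (fst z - fst p) * (snd z - snd p) \<le> R} \<le> R * (1 + ln (a * b / R))"
    (is "measure lebesgue ?H \<le> _")
proof -
  have bpos: "b > 0" using ab R a b by (cases "b = 0") auto
  have apos: "a > 0" using ab R a b by (cases "a = 0") auto
  define x0 where "x0 = fst p"
  define c where "c = x0 + R / b"
  define d where "d = x0 + a"
  have cd: "c \<le> d" unfolding c_def d_def using ab bpos by (simp add: field_simps)
  have c0: "0 < c - x0" unfolding c_def using R bpos by simp
  define g where "g x = (if x \<le> c then b else R / (x - x0))" for x
  have int1: "(g has_integral (b * (c - x0))) {x0..c}"
  proof -
    have "((\<lambda>x. b) has_integral (b * (c - x0))) {x0..c}"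
      using has_integral_const_real[of b x0 c] c0 by (simp add: mult.commute)
    then show ?thesis by (rule has_integral_eq[rotated]) (simp add: g_def)
  qed
  have int2: "(g has_integral (R * ln (d - x0) - R * ln (c - x0))) {c..d}"
  proof -
    have "((\<lambda>x. R / (x - x0)) has_integral (R * ln (d - x0) - R * ln (c - x0))) {c..d}"
      by (rule ln_integral[OF c0 cd R])
    moreover have "R / (x - x0) = g x" if "x \<in> {c..d}" for x
    proof (cases "x = c")
      case True
      then have "x - x0 = R / b" by (simp add: c_def)
      then show ?thesis using True bpos R by (simp add: g_def)
    next
      case False then show ?thesis using that by (simp add: g_def)
    qed
    ultimately show ?thesis by (rule has_integral_eq[rotated])
  qed
  define I where "I = b * (c - x0) + (R * ln (d - x0) - R * ln (c - x0))"
  have intg: "(g has_integral I) {x0..d}"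
    unfolding I_def using has_integral_combine[OF _ cd int1 int2] c0 by simp
  have Ival: "I = R * (1 + ln (a * b / R))"
  proof -
    have "b * (c - x0) = R" using bpos by (simp add: c_def)
    moreover have "ln (d - x0) - ln (c - x0) = ln (a * b / R)"
      using apos bpos R by (simp add: c_def d_def ln_div ln_mult)
    ultimately show ?thesis unfolding I_def by (simp add: algebra_simps)
  qed
  have gnn: "\<And>x. x \<in> {x0..d} \<Longrightarrow> 0 \<le> g x"
    unfolding g_def using b R c0 by auto
  have nnI: "(\<integral>\<^sup>+x. ennreal (g x) * indicator {x0..d} x \<partial>lborel) = ennreal I"
    by (rule nn_integral_has_integral_lebesgue'[OF gnn intg])
  have closedH: "closed ?H"
    by (intro closed_Collect_conj closed_Collect_le continuous_intros)
  then have Hb: "?H \<in> sets borel" by simp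
  have slice: "emeasure lborel (Pair x -` ?H) \<le> ennreal (g x) * indicator {x0..d} x" for x
  proof (cases "x \<in> {x0..d}")
    case True
    have "Pair x -` ?H \<subseteq> {snd p .. snd p + g x}"
    proof
      fix y assume y: "y \<in> Pair x -` ?H"
      then have y1: "snd p \<le> y" "y \<le> snd p + b" "(x - x0) * (y - snd p) \<le> R"
        by (auto simp: x0_def)
      show "y \<in> {snd p .. snd p + g x}"
      proof (cases "x \<le> c")
        case True then show ?thesis using y1 by (simp add: g_def)
      next
        case False
        then have "x - x0 > 0" using c0 by simp
        then have "y - snd p \<le> R / (x - x0)" using y1(3) by (simp add: field_simps mult.commute)
        then show ?thesis using y1 False by (simp add: g_def)
      qed
    qed
    then have "emeasure lborel (Pair x -` ?H) \<le> emeasure lborel {snd p .. snd p + g x}"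
      by (rule emeasure_mono) simp
    also have "\<dots> = ennreal (g x)" using gnn[OF True] by simp
    finally show ?thesis using True by simp
  next
    case False
    then have "\<not> (fst p \<le> x \<and> x \<le> fst p + a)" by (simp add: x0_def d_def)
    then have E: "Pair x -` ?H = {}" by auto
    show ?thesis unfolding E by simp
  qed
  have "emeasure lborel ?H \<le> ennreal I"
    unfolding emeasure_lborel_pair_slices[OF Hb] nnI[symmetric]
    by (rule nn_integral_mono) (rule slice)
  moreover have "I \<ge> 0"
  proof -
    have "1 < a * b / R" using R ab by simp
    then have "0 < ln (a * b / R)" by (rule ln_gt_zero)
    then show ?thesis using Ival R by simp
  qed
  ultimately have "measure lborel ?H \<le> I"
    by (simp add: measure_def enn2real_leI)
  then show ?thesis using Hb Ival by simp
qed


lemma convex_comb4: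
  fixes v0 v1 v2 v3 :: pt
  assumes "0 \<le> s" "s \<le> 1" "0 \<le> u" "u \<le> 1"
  shows "(1 - u) *\<^sub>R ((1 - s) *\<^sub>R v0 + s *\<^sub>R v1) + u *\<^sub>R ((1 - s) *\<^sub>R v3 + s *\<^sub>R v2)
           \<in> convex hull {v0, v1, v2, v3}"
proof -
  let ?K = "convex hull {v0, v1, v2, v3}"
  have cv: "convex ?K" by (rule convex_convex_hull)
  have in4: "v0 \<in> ?K" "v1 \<in> ?K" "v2 \<in> ?K" "v3 \<in> ?K" by (simp_all add: hull_inc)
  have w1: "(1 - s) *\<^sub>R v0 + s *\<^sub>R v1 \<in> ?K" using assms by (intro convexD[OF cv in4(1,2)]) auto
  have w2: "(1 - s) *\<^sub>R v3 + s *\<^sub>R v2 \<in> ?K" using assms by (intro convexD[OF cv in4(4,3)]) auto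
  show ?thesis using assms by (intro convexD[OF cv w1 w2]) auto
qed

lemma lmeas_hull4: "convex hull {v0, v1, v2, v3::pt} \<in> lmeasurable"
  by (intro lmeasurable_compact compact_convex_hull finite_imp_compact) simp

lemma par_A_area:
  assumes lam: "0 < lam" and a: "0 \<le> a"
  shows "lam * a\<^sup>2 \<le> area (par_A lam p a)"
proof (cases "a = 0")
  case True then show ?thesis by (simp add: area_def)
next
  case False
  then have apos: "a > 0" using a by simp
  define P where "P = {z::pt. snd p - lam * a \<le> snd z \<and> snd z \<le> snd p \<and>
      fst p + (snd p - snd z) \<le> fst z \<and> fst z \<le> fst p + a + (snd p - snd z)}"
  have PA: "P \<subseteq> par_A lam p a"
  proof
    fix z assume z: "z \<in> P"
    define u where "u = (snd p - snd z) / (lam * a)"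
    define s where "s = (fst z - fst p - (snd p - snd z)) / a"
    have u01: "0 \<le> u" "u \<le> 1" using z lam apos by (auto simp: u_def P_def field_simps)
    have s01: "0 \<le> s" "s \<le> 1" using z lam apos by (auto simp: s_def P_def field_simps)
    have "z = (1 - u) *\<^sub>R ((1 - s) *\<^sub>R p + s *\<^sub>R (fst p + a, snd p)) +
              u *\<^sub>R ((1 - s) *\<^sub>R (fst p + lam * a, snd p - lam * a) + s *\<^sub>R (fst p + (1 + lam) * a, snd p - lam * a))"
      using lam apos by (simp add: prod_eq_iff u_def s_def field_simps)
    then show "z \<in> par_A lam p a"
      unfolding par_A_def using convex_comb4[OF s01 u01] by metis
  qed
  have Pc: "closed P" unfolding P_def
    by (intro closed_Collect_conj closed_Collect_le continuous_intros)
  then have Pb: "P \<in> sets borel" by simp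
  have "emeasure lborel P = (\<integral>\<^sup>+y. ennreal a * indicator {snd p - lam * a .. snd p} y \<partial>lborel)"
    unfolding emeasure_lborel_pair_slices2[OF Pb]
  proof (rule nn_integral_cong)
    fix y :: real
    show "emeasure lborel ((\<lambda>x. (x, y)) -` P) = ennreal a * indicator {snd p - lam * a .. snd p} y"
    proof (cases "y \<in> {snd p - lam * a .. snd p}")
      case True
      then have E: "(\<lambda>x. (x, y)) -` P = {fst p + (snd p - y) .. fst p + a + (snd p - y)}"
        by (auto simp: P_def)
      show ?thesis unfolding E using True apos by simp
    next
      case False
      then have E: "(\<lambda>x. (x, y)) -` P = {}" by (auto simp: P_def)
      show ?thesis unfolding E using False by simp
    qed
  qed
  also have "\<dots> = ennreal a * ennreal (lam * a)" 
    using lam apos by (subst nn_integral_cmult_indicator) auto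
  finally have "emeasure lborel P = ennreal (lam * a\<^sup>2)"
    using lam apos by (simp add: ennreal_mult[symmetric] power2_eq_square mult_ac)
  then have mP: "measure lebesgue P = lam * a\<^sup>2"
    using Pb lam by (simp add: measure_def)
  have "measure lebesgue P \<le> area (par_A lam p a)"
    unfolding area_def par_A_def using PA Pb lmeas_hull4 unfolding par_A_def
    by (intro measure_mono_fmeasurable) auto
  then show ?thesis using mP by simp
qed

lemma par_B_area:
  assumes lam: "0 < lam" and b: "0 \<le> b"
  shows "lam * b\<^sup>2 \<le> area (par_B lam p b)"
proof (cases "b = 0")
  case True then show ?thesis by (simp add: area_def)
next
  case False
  then have bpos: "b > 0" using b by simp
  define P where "P = {z::pt. fst p - lam * b \<le> fst z \<and> fst z \<le> fst p \<and>
      snd p + (fst p - fst z) \<le> snd z \<and> snd z \<le> snd p + b + (fst p - fst z)}"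
  have PB: "P \<subseteq> par_B lam p b"
  proof
    fix z assume z: "z \<in> P"
    define u where "u = (fst p - fst z) / (lam * b)"
    define s where "s = (snd z - snd p - (fst p - fst z)) / b"
    have u01: "0 \<le> u" "u \<le> 1" using z lam bpos by (auto simp: u_def P_def field_simps)
    have s01: "0 \<le> s" "s \<le> 1" using z lam bpos by (auto simp: s_def P_def field_simps)
    have "z = (1 - u) *\<^sub>R ((1 - s) *\<^sub>R p + s *\<^sub>R (fst p, snd p + b)) +
              u *\<^sub>R ((1 - s) *\<^sub>R (fst p - lam * b, snd p + lam * b) + s *\<^sub>R (fst p - lam * b, snd p + (1 + lam) * b))"
      using lam bpos by (simp add: prod_eq_iff u_def s_def field_simps)
    then show "z \<in> par_B lam p b"
      unfolding par_B_def using convex_comb4[OF s01 u01] by metis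
  qed
  have Pc: "closed P" unfolding P_def
    by (intro closed_Collect_conj closed_Collect_le continuous_intros)
  then have Pb: "P \<in> sets borel" by simp
  have "emeasure lborel P = (\<integral>\<^sup>+x. ennreal b * indicator {fst p - lam * b .. fst p} x \<partial>lborel)"
    unfolding emeasure_lborel_pair_slices[OF Pb]
  proof (rule nn_integral_cong)
    fix x :: real
    show "emeasure lborel (Pair x -` P) = ennreal b * indicator {fst p - lam * b .. fst p} x"
    proof (cases "x \<in> {fst p - lam * b .. fst p}")
      case True
      then have E: "Pair x -` P = {snd p + (fst p - x) .. snd p + b + (fst p - x)}"
        by (auto simp: P_def)
      show ?thesis unfolding E using True bpos by simp
    next
      case False
      then have E: "Pair x -` P = {}" by (auto simp: P_def)
      show ?thesis unfolding E using False by simp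
    qed
  qed
  also have "\<dots> = ennreal b * ennreal (lam * b)" 
    using lam bpos by (subst nn_integral_cmult_indicator) auto
  finally have "emeasure lborel P = ennreal (lam * b\<^sup>2)"
    using lam bpos by (simp add: ennreal_mult[symmetric] power2_eq_square mult_ac)
  then have mP: "measure lebesgue P = lam * b\<^sup>2"
    using Pb lam by (simp add: measure_def)
  have "measure lebesgue P \<le> area (par_B lam p b)"
    unfolding area_def par_B_def using PB Pb lmeas_hull4 unfolding par_B_def
    by (intro measure_mono_fmeasurable) auto
  then show ?thesis using mP by simp
qed


lemma slice_x_lmeas:
  assumes "closed M" "M \<subseteq> unit_square"
  shows "{x. (x, y) \<in> M} \<in> lmeasurable"
proof -
  have "{x. (x, y) \<in> M} = (\<lambda>x. (x, y)) -` M" by auto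
  moreover have "closed ((\<lambda>x. (x, y)) -` M)"
    using assms(1) by (intro continuous_closed_vimage) (auto intro!: continuous_intros)
  moreover have "bounded {x. (x, y) \<in> M}"
  proof -
    have "{x. (x, y) \<in> M} \<subseteq> cbox 0 1" using assms(2) by (auto simp: unit_square_def)
    then show ?thesis using bounded_cbox bounded_subset by blast
  qed
  ultimately show ?thesis by (metis compact_eq_bounded_closed lmeasurable_compact)
qed

lemma slice_y_lmeas:
  assumes "closed M" "M \<subseteq> unit_square"
  shows "{y. (x, y) \<in> M} \<in> lmeasurable"
proof -
  have "{y. (x, y) \<in> M} = (\<lambda>y. (x, y)) -` M" by auto
  moreover have "closed ((\<lambda>y. (x, y)) -` M)"
    using assms(1) by (intro continuous_closed_vimage) (auto intro!: continuous_intros)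
  moreover have "bounded {y. (x, y) \<in> M}"
  proof -
    have "{y. (x, y) \<in> M} \<subseteq> cbox 0 1" using assms(2) by (auto simp: unit_square_def)
    then show ?thesis using bounded_cbox bounded_subset by blast
  qed
  ultimately show ?thesis by (metis compact_eq_bounded_closed lmeasurable_compact)
qed

lemma main_bound:
  fixes \<alpha> \<beta> lam :: real
  assumes finQ: "finite Q" and QU: "Q \<subseteq> unit_square" and pU: "p \<in> unit_square"
    and hb: "\<beta> \<ge> 3 + 2 * \<alpha>" and lam: "0 < lam" "lam < \<alpha>"
    and bt: "beta_tile \<beta> (Tset p Q)"
    and tipR: "right_tip \<alpha> \<beta> (Tset p Q) TR" and tipU: "upper_tip \<alpha> \<beta> (Tset p Q) TU"
  shows "area (Tset p Q) \<le>
     \<beta> / (2 * lam * exp (\<beta> - 3 - 2 * \<alpha>)) *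
       (area (par_A lam p (bottom_len p (Tset p Q - TR - TU))) +
        area (par_B lam p (left_len p (Tset p Q - TR - TU))))"
proof -
  define T where "T = Tset p Q"
  define K where "K = \<beta> - 3 - 2 * \<alpha>"
  have apos: "\<alpha> > 0" using lam by simp
  have bpos: "\<beta> > 0" using hb apos by simp
  have K0: "K \<ge> 0" using hb by (simp add: K_def)
  define RHS where "RHS = \<beta> / (2 * lam * exp K) *
       (area (par_A lam p (bottom_len p (T - TR - TU))) +
        area (par_B lam p (left_len p (T - TR - TU))))"
  have RHS0: "0 \<le> RHS" unfolding RHS_def using bpos lam
    by (intro mult_nonneg_nonneg divide_nonneg_pos add_nonneg_nonneg) (auto simp: area_def)
  have "area T \<le> RHS"
  proof (cases "T = {}")
    case True then show ?thesis using RHS0 by (simp add: area_def)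
  next
    case False
    then obtain z0 where "z0 \<in> T" by blast
    then have z0p: "fst p \<le> fst z0" "snd p \<le> snd z0" using T_sub by (auto simp: T_def)
    have pT: "p \<in> T" using T_down[OF \<open>z0 \<in> T\<close>[unfolded T_def] pU] z0p by (simp add: T_def)
    have "{fst p..fst p} \<times> {snd p..snd p} \<subseteq> T" using pT by (auto simp: mem_Times_iff)
    then have "(fst p - fst p) * (snd p - snd p) < area T / \<beta>"
      using bt unfolding beta_tile_def T_def by blast
    then have Rpos0: "0 < area T / \<beta>" by simp
    define R where "R = area T / \<beta>"
    have Rpos: "R > 0" using Rpos0 by (simp add: R_def)
    have aT: "area T = \<beta> * R" using bpos by (simp add: R_def)
    have bTR: "area TR < (\<alpha> + 1) * R"
      using right_tip_bound[OF finQ QU pU bt _ apos tipR] Rpos0 by (simp add: R_def T_def)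
    have bTU: "area TU < (\<alpha> + 1) * R"
      using upper_tip_bound[OF finQ QU pU bt _ apos tipU] Rpos0 by (simp add: R_def T_def)
    obtain cR where cR: "concave_corner T cR" "TR = right_part T cR"
      using tipR unfolding right_tip_def T_def by blast
    obtain cU where cU: "concave_corner T cU" "TU = upper_part T cU"
      using tipU unfolding upper_tip_def T_def by blast
    have "cU \<in> T" using concave_in[OF cU(1)] closed_T by (simp add: T_def)
    then have pcU: "snd p \<le> snd cU" using T_sub by (auto simp: T_def)
    define M where "M = T - TR - TU"
    have Meq: "M = T \<inter> {z. fst z \<le> fst cR} \<inter> {z. snd z \<le> snd cU}"
      by (auto simp: M_def cR(2) cU(2) right_part_def upper_part_def)
    have Mc: "closed M" unfolding Meq T_def
      by (intro closed_Int closed_T closed_Collect_le continuous_intros)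
    have MT: "M \<subseteq> T" by (auto simp: M_def)
    have MU: "M \<subseteq> unit_square" using T_sub[of _ p Q] MT by (auto simp: T_def)
    have lmT: "T \<in> lmeasurable" by (simp add: T_def lmeas_T)
    have "bounded M" using MT compact_T[of p Q] unfolding T_def
      using bounded_subset compact_imp_bounded by blast
    then have lmM: "M \<in> lmeasurable" using Mc compact_eq_bounded_closed lmeasurable_compact by blast
    have lmTR: "TR \<in> lmeasurable" using cR(2) lmeas_rp by (simp add: T_def)
    have lmTU: "TU \<in> lmeasurable" using cU(2) lmeas_up by (simp add: T_def)
    have "area T \<le> measure lebesgue (M \<union> TR \<union> TU)"
      unfolding area_def using lmM lmTR lmTU fmeasurableD[OF lmT]
      by (intro measure_mono_fmeasurable) (auto simp: M_def)
    also have "\<dots> \<le> measure lebesgue (M \<union> TR) + area TU"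
      unfolding area_def using lmM lmTR lmTU by (intro measure_Un_le) auto
    also have "\<dots> \<le> area M + area TR + area TU"
      unfolding area_def using lmM lmTR measure_Un_le[of M lebesgue TR] by auto
    finally have "area T \<le> area M + area TR + area TU" .
    then have Mbig: "R * (K + 1) < area M" using bTR bTU aT
      by (simp add: K_def algebra_simps)
    define a where "a = bottom_len p M"
    define b where "b = left_len p M"
    have a0: "a \<ge> 0" and b0: "b \<ge> 0" by (simp_all add: a_def b_def bottom_len_def left_len_def)
    define H where "H = {z. fst p \<le> fst z \<and> fst z \<le> fst p + a \<and> snd p \<le> snd z \<and> snd z \<le> snd p + b \<and>
           (fst z - fst p) * (snd z - snd p) \<le> R}"
    have MH: "M \<subseteq> H"
    proof
      fix z assume zM: "z \<in> M"
      then have zT: "z \<in> T" and zc: "fst z \<le> fst cR" "snd z \<le> snd cU" by (auto simp: Meq)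
      have pz: "fst p \<le> fst z" "snd p \<le> snd z" using zT T_sub by (auto simp: T_def)
      have "{fst p..fst z} \<times> {snd p..snd z} \<subseteq> T"
      proof
        fix w assume "w \<in> {fst p..fst z} \<times> {snd p..snd z}"
        then show "w \<in> T" using T_down[OF zT[unfolded T_def] pU] by (auto simp: T_def mem_Times_iff)
      qed
      then have prod: "(fst z - fst p) * (snd z - snd p) < R"
        using bt pz unfolding beta_tile_def R_def T_def by blast
      have sx: "{fst p..fst z} \<subseteq> {x. (x, snd p) \<in> M}"
      proof
        fix x assume x: "x \<in> {fst p..fst z}"
        have "(x, snd p) \<in> T" using T_down[OF zT[unfolded T_def] pU, of "(x, snd p)"] x pz by (auto simp: T_def)
        then show "x \<in> {x. (x, snd p) \<in> M}" using x zc pcU by (auto simp: Meq)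
      qed
      have "measure lebesgue {fst p..fst z} \<le> a"
        unfolding a_def bottom_len_def using sx slice_x_lmeas[OF Mc MU]
        by (intro measure_mono_fmeasurable) auto
      then have za: "fst z - fst p \<le> a" using pz by simp
      have sy: "{snd p..snd z} \<subseteq> {y. (fst p, y) \<in> M}"
      proof
        fix y assume y: "y \<in> {snd p..snd z}"
        have "(fst p, y) \<in> T" using T_down[OF zT[unfolded T_def] pU, of "(fst p, y)"] y pz by (auto simp: T_def)
        moreover have "fst p \<le> fst cR"
        proof -
          have "cR \<in> T" using concave_in[OF cR(1)] closed_T by (simp add: T_def)
          then show ?thesis using T_sub by (auto simp: T_def)
        qed
        ultimately show "y \<in> {y. (fst p, y) \<in> M}" using y zc by (auto simp: Meq)
      qed
      have "measure lebesgue {snd p..snd z} \<le> b"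
        unfolding b_def left_len_def using sy slice_y_lmeas[OF Mc MU]
        by (intro measure_mono_fmeasurable) auto
      then have zb: "snd z - snd p \<le> b" using pz by simp
      show "z \<in> H" using pz za zb prod by (simp add: H_def)
    qed
    have Hc: "closed H" unfolding H_def
      by (intro closed_Collect_conj closed_Collect_le continuous_intros)
    have HB: "H \<subseteq> cbox (fst p, snd p) (fst p + a, snd p + b)"
    proof -
      obtain p1 p2 where pp: "p = (p1, p2)" by (cases p)
      show ?thesis unfolding pp by (auto simp: H_def pp)
    qed
    have lmH: "H \<in> lmeasurable"
      using Hc HB by (meson bounded_cbox bounded_subset compact_eq_bounded_closed lmeasurable_compact)
    have MleH: "area M \<le> measure lebesgue H"
      unfolding area_def using MH lmM lmH by (intro measure_mono_fmeasurable) auto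
    have abig: "R * exp K < a * b"
    proof (rule ccontr)
      assume "\<not> R * exp K < a * b"
      then have abK: "a * b \<le> R * exp K" by simp
      show False
      proof (cases "a * b \<le> R")
        case True
        have "measure lebesgue H \<le> measure lebesgue (cbox (fst p, snd p) (fst p + a, snd p + b))"
          using HB lmH by (intro measure_mono_fmeasurable) auto
        also have "\<dots> = a * b" using a0 b0 meas_cbox[of "fst p" "snd p" "fst p + a" "snd p + b"] by simp
        finally have "area M \<le> R" using MleH True by linarith
        moreover have "R \<le> R * (K + 1)" using Rpos K0 by simp
        ultimately show False using Mbig by linarith
      next
        case False
        then have hR: "R < a * b" by simp
        have "measure lebesgue H \<le> R * (1 + ln (a * b / R))"
          unfolding H_def by (rule hyper_bound[OF Rpos a0 b0 hR])
        moreover have "ln (a * b / R) \<le> K"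
        proof -
          have "a * b / R \<le> exp K" using abK Rpos by (simp add: field_simps)
          moreover have "0 < a * b / R" using hR Rpos by simp
          ultimately show ?thesis by (metis ln_exp ln_le_cancel_iff exp_gt_zero)
        qed
        ultimately have "measure lebesgue H \<le> R * (K + 1)" using Rpos
          by (smt (verit) mult_left_mono)
        then show False using MleH Mbig by linarith
      qed
    qed
    have parA: "lam * a\<^sup>2 \<le> area (par_A lam p a)" by (rule par_A_area[OF lam(1) a0])
    have parB: "lam * b\<^sup>2 \<le> area (par_B lam p b)" by (rule par_B_area[OF lam(1) b0])
    have "2 * lam * (a * b) \<le> lam * a\<^sup>2 + lam * b\<^sup>2"
    proof -
      have "0 \<le> lam * (a - b)\<^sup>2" using lam by simp
      then show ?thesis by (simp add: power2_eq_square algebra_simps)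
    qed
    then have sumA: "2 * lam * (R * exp K) \<le> area (par_A lam p a) + area (par_B lam p b)"
      using parA parB abig lam by (smt (verit) mult_left_mono mult_pos_pos)
    have c0: "0 < \<beta> / (2 * lam * exp K)" using bpos lam by simp
    have "area T = \<beta> / (2 * lam * exp K) * (2 * lam * (R * exp K))"
      using aT lam by (simp add: field_simps)
    also have "\<dots> \<le> \<beta> / (2 * lam * exp K) * (area (par_A lam p a) + area (par_B lam p b))"
      using sumA c0 by (intro mult_left_mono) auto
    finally show ?thesis unfolding RHS_def a_def b_def M_def by simp
  qed
  then show ?thesis by (simp add: RHS_def T_def K_def)
qed


theorem lemma4:
  fixes \<alpha> \<beta> lam :: real and S :: "pt set" and ps :: "pt list" and i :: nat
  assumes "\<beta> \<ge> 3 + 2 * \<alpha>" and "0 < lam" and "lam < \<alpha>"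
    and "finite S" and "S \<subseteq> unit_square" and "(0, 0) \<in> S"
    and "processing_order S ps" and "i < length ps"
    and "beta_tile \<beta> (tile ps i)"
    and "right_tip \<alpha> \<beta> (tile ps i) TR" and "upper_tip \<alpha> \<beta> (tile ps i) TU"
  shows "area (tile ps i) \<le>
     \<beta> / (2 * lam * exp (\<beta> - 3 - 2 * \<alpha>)) *
       (area (par_A lam (ps ! i) (bottom_len (ps ! i) (tile ps i - TR - TU))) +
        area (par_B lam (ps ! i) (left_len (ps ! i) (tile ps i - TR - TU))))"
proof -
  define p where "p = ps ! i"
  define Q where "Q = (\<lambda>j. ps ! j) ` {..<i}"
  have finQ: "finite Q" by (simp add: Q_def)
  have setps: "set ps = S" using assms(7) by (simp add: processing_order_def)
  have QU: "Q \<subseteq> unit_square"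
  proof
    fix q assume "q \<in> Q"
    then obtain j where "j < i" "q = ps ! j" by (auto simp: Q_def)
    then have "q \<in> set ps" using assms(8) by simp
    then show "q \<in> unit_square" using setps assms(5) by blast
  qed
  have pU: "p \<in> unit_square" using assms(8) setps assms(5) nth_mem unfolding p_def by blast
  have tT: "tile ps i = Tset p Q"
    unfolding tile_def Tset_def Dset_def p_def Q_def by (rule arg_cong[where f = closure]) auto
  show ?thesis
    using main_bound[OF finQ QU pU assms(1,2,3)] assms(9,10,11) unfolding tT p_def[symmetric] by blast
qed

end
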